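(* Let $D$ be a perfect subgroup of a group $G$, let $F$ be a $D$-full subgroup of $G$, and let $\pi\colon S\to G$ be a surjective group homomorphism whose kernel is contained in the center of $S$. Then: (1) there exists a smallest subgroup $\tilde D\le S$ with $\pi(\tilde D)=D$ (i.e. $\tilde D$ is contained in every subgroup of $S$ mapping onto $D$), and likewise there is a smallest subgroup $\tilde F\le S$ with $\pi(\tilde F)=F$; (2) for any subgroups $\hat D,\hat F\le S$ with $\pi(\hat D)=D$ and $\pi(\hat F)=F$ one has $[\hat F,\hat F]=[\hat D,\hat F]=\tilde F$. In particular $\tilde D$ is perfect and $\tilde F$ is $\tilde D$-full.
   Context: A group is perfect if it equals its commutator subgroup. For subsets $X,Y$ of a group, $[X,Y]$ is the subgroup generated by all commutators $[a,b]=a^{-1}b^{-1}ab$, $a\in X$, $b\in Y$, and $X^Y$ is the subgroup generated by all $b^{-1}ab$, $a\in X$, $b\in Y$. For a subgroup $D\le G$, $L(D,G)$ denotes the lattice of subgroups of $G$ containing $D$; a subgroup $F\in L(D,G)$ is called $D$-full if $D^F=F$. *)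

theory Defs
  imports "HOL-Algebra.Algebra"
begin

definition grp_comm :: "('a, 'b) monoid_scheme \<Rightarrow> 'a \<Rightarrow> 'a \<Rightarrow> 'a" where
  "grp_comm G a b = inv\<^bsub>G\<^esub> a \<otimes>\<^bsub>G\<^esub> inv\<^bsub>G\<^esub> b \<otimes>\<^bsub>G\<^esub> a \<otimes>\<^bsub>G\<^esub> b"

definition comm_subgroup :: "('a, 'b) monoid_scheme \<Rightarrow> 'a set \<Rightarrow> 'a set \<Rightarrow> 'a set" where
  "comm_subgroup G A B = generate G {grp_comm G a b | a b. a \<in> A \<and> b \<in> B}"

definition conj_closure :: "('a, 'b) monoid_scheme \<Rightarrow> 'a set \<Rightarrow> 'a set \<Rightarrow> 'a set" where
  "conj_closure G A B = generate G {inv\<^bsub>G\<^esub> b \<otimes>\<^bsub>G\<^esub> a \<otimes>\<^bsub>G\<^esub> b | a b. a \<in> A \<and> b \<in> B}"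

definition perfect_subgroup :: "('a, 'b) monoid_scheme \<Rightarrow> 'a set \<Rightarrow> bool" where
  "perfect_subgroup G D \<longleftrightarrow> subgroup D G \<and> comm_subgroup G D D = D"

definition full_subgroup :: "('a, 'b) monoid_scheme \<Rightarrow> 'a set \<Rightarrow> 'a set \<Rightarrow> bool" where
  "full_subgroup G D F \<longleftrightarrow> subgroup D G \<and> subgroup F G \<and> D \<subseteq> F \<and> conj_closure G D F = F"

definition group_center :: "('a, 'b) monoid_scheme \<Rightarrow> 'a set" where
  "group_center G = {z \<in> carrier G. \<forall>x \<in> carrier G. z \<otimes>\<^bsub>G\<^esub> x = x \<otimes>\<^bsub>G\<^esub> z}"

end

theory Submission
  imports Defs
begin

lemma comm_central_left:
  fixes S (structure)
  assumes "group S" "a \<in> carrier S" "b \<in> carrier S" "z \<in> group_center S"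
  shows "grp_comm S (a \<otimes>\<^bsub>S\<^esub> z) b = grp_comm S a b"
proof -
  interpret group S by fact
  have zc: "z \<in> carrier S" and zx: "\<And>x. x \<in> carrier S \<Longrightarrow> z \<otimes> x = x \<otimes> z"
    using assms(4) unfolding group_center_def by auto
  have X: "inv a \<otimes> inv b \<otimes> a \<otimes> b \<in> carrier S" using assms by simp
  have "grp_comm S (a \<otimes> z) b = inv z \<otimes> (inv a \<otimes> inv b \<otimes> a \<otimes> (z \<otimes> b))"
    unfolding grp_comm_def using assms zc by (simp add: inv_mult_group m_assoc)
  also have "\<dots> = inv z \<otimes> ((inv a \<otimes> inv b \<otimes> a \<otimes> b) \<otimes> z)"
    using assms zc zx[of b] by (simp add: m_assoc)
  also have "\<dots> = inv z \<otimes> (z \<otimes> (inv a \<otimes> inv b \<otimes> a \<otimes> b))"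
    using zx[OF X] by simp
  also have "\<dots> = inv a \<otimes> inv b \<otimes> a \<otimes> b"
    using X zc by (simp add: m_assoc[symmetric])
  finally show ?thesis unfolding grp_comm_def .
qed

lemma comm_central_right:
  fixes S (structure)
  assumes "group S" "a \<in> carrier S" "b \<in> carrier S" "z \<in> group_center S"
  shows "grp_comm S a (b \<otimes>\<^bsub>S\<^esub> z) = grp_comm S a b"
proof -
  interpret group S by fact
  have zc: "z \<in> carrier S" and zx: "\<And>x. x \<in> carrier S \<Longrightarrow> z \<otimes> x = x \<otimes> z"
    using assms(4) unfolding group_center_def by auto
  have izx: "\<And>x. x \<in> carrier S \<Longrightarrow> inv z \<otimes> x = x \<otimes> inv z"
  proof -
    fix x assume x: "x \<in> carrier S"
    have "z \<otimes> (inv z \<otimes> x) = z \<otimes> (x \<otimes> inv z)"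
      using zx[OF x] zc x by (simp add: m_assoc[symmetric]) (simp add: m_assoc)
    thus "inv z \<otimes> x = x \<otimes> inv z" using zc x by (meson inv_closed m_closed l_cancel)
  qed
  have X: "inv a \<otimes> inv b \<otimes> a \<otimes> b \<in> carrier S" using assms by simp
  have "grp_comm S a (b \<otimes> z) = inv a \<otimes> (inv z \<otimes> (inv b \<otimes> a \<otimes> b)) \<otimes> z"
    unfolding grp_comm_def using assms zc by (simp add: inv_mult_group m_assoc)
  also have "\<dots> = inv z \<otimes> (inv a \<otimes> inv b \<otimes> a \<otimes> b) \<otimes> z"
    using assms zc izx[of "inv a"] by (simp add: m_assoc[symmetric])
  also have "\<dots> = (inv a \<otimes> inv b \<otimes> a \<otimes> b) \<otimes> inv z \<otimes> z"
    using izx[OF X] by simp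
  also have "\<dots> = inv a \<otimes> inv b \<otimes> a \<otimes> b"
    using X zc by (simp add: m_assoc)
  finally show ?thesis unfolding grp_comm_def .
qed

lemma comm_lift:
  fixes S (structure)
  assumes "group S" "\<pi> \<in> hom S G" "kernel S G \<pi> \<subseteq> group_center S"
    and "P \<subseteq> carrier S" "P' \<subseteq> carrier S" "Q \<subseteq> carrier S" "Q' \<subseteq> carrier S"
    and "\<forall>a\<in>P. \<exists>a'\<in>P'. \<pi> a = \<pi> a'" "\<forall>a\<in>Q. \<exists>a'\<in>Q'. \<pi> a = \<pi> a'"
    and "group G"
  shows "comm_subgroup S P Q \<subseteq> comm_subgroup S P' Q'"
proof -
  interpret group S by fact
  interpret gh: group_hom S G \<pi> using assms by (simp add: group_hom_def group_hom_axioms_def)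
  have key: "\<And>a a'. a \<in> carrier S \<Longrightarrow> a' \<in> carrier S \<Longrightarrow> \<pi> a = \<pi> a' \<Longrightarrow>
      inv a' \<otimes> a \<in> group_center S \<and> a = a' \<otimes> (inv a' \<otimes> a)"
  proof -
    fix a a' assume a: "a \<in> carrier S" "a' \<in> carrier S" "\<pi> a = \<pi> a'"
    have "\<pi> (inv a' \<otimes> a) = \<one>\<^bsub>G\<^esub>"
      using a by (simp add: gh.hom_mult gh.hom_inv)
    hence "inv a' \<otimes> a \<in> kernel S G \<pi>" using a by (simp add: kernel_def)
    moreover have "a = a' \<otimes> (inv a' \<otimes> a)" using a by (simp add: m_assoc[symmetric])
    ultimately show "inv a' \<otimes> a \<in> group_center S \<and> a = a' \<otimes> (inv a' \<otimes> a)"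
      using assms(3) by blast
  qed
  show ?thesis unfolding comm_subgroup_def
  proof (rule mono_generate, safe)
    fix a b assume ab: "a \<in> P" "b \<in> Q"
    obtain a' where a': "a' \<in> P'" "\<pi> a = \<pi> a'" using assms(8) ab by blast
    obtain b' where b': "b' \<in> Q'" "\<pi> b = \<pi> b'" using assms(9) ab by blast
    have c: "a \<in> carrier S" "b \<in> carrier S" "a' \<in> carrier S" "b' \<in> carrier S"
      using ab a' b' assms(4-7) by auto
    obtain z w where z: "z \<in> group_center S" "a = a' \<otimes> z"
      and w: "w \<in> group_center S" "b = b' \<otimes> w"
      using key[OF c(1,3) a'(2)] key[OF c(2,4) b'(2)] by blast
    have "grp_comm S a b = grp_comm S a' b'"
      using z w c comm_central_left[OF assms(1) c(3), of "b' \<otimes> w" z]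
        comm_central_right[OF assms(1) c(3,4) w(1)]
      by (simp add: group_center_def)
    thus "\<exists>a'' b''. grp_comm S a b = grp_comm S a'' b'' \<and> a'' \<in> P' \<and> b'' \<in> Q'"
      using a' b' by blast
  qed
qed

lemma comm_in_subgroup:
  fixes S (structure)
  assumes "group S" "subgroup H S" "A \<subseteq> H" "B \<subseteq> H"
  shows "comm_subgroup S A B \<subseteq> H"
proof -
  interpret group S by fact
  show ?thesis unfolding comm_subgroup_def
    by (rule generate_subgroup_incl[OF _ assms(2)])
       (use assms in \<open>fastforce simp: grp_comm_def intro!: subgroup.m_closed[OF assms(2)] subgroup.m_inv_closed[OF assms(2)]\<close>)
qed

lemma conj_in_subgroup:
  fixes S (structure)
  assumes "group S" "subgroup H S" "A \<subseteq> H" "B \<subseteq> H"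
  shows "conj_closure S A B \<subseteq> H"
proof -
  interpret group S by fact
  show ?thesis unfolding conj_closure_def
    by (rule generate_subgroup_incl[OF _ assms(2)])
       (use assms in \<open>fastforce intro!: subgroup.m_closed[OF assms(2)] subgroup.m_inv_closed[OF assms(2)]\<close>)
qed

lemma comm_is_subgroup:
  fixes S (structure)
  assumes "group S" "A \<subseteq> carrier S" "B \<subseteq> carrier S"
  shows "subgroup (comm_subgroup S A B) S"
proof -
  interpret group S by fact
  show ?thesis unfolding comm_subgroup_def
    by (rule generate_is_subgroup) (use assms in \<open>fastforce simp: grp_comm_def intro!: m_closed inv_closed\<close>)
qed

lemma conj_is_subgroup:
  fixes S (structure)
  assumes "group S" "A \<subseteq> carrier S" "B \<subseteq> carrier S"
  shows "subgroup (conj_closure S A B) S"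
proof -
  interpret group S by fact
  show ?thesis unfolding conj_closure_def
    by (rule generate_is_subgroup) (use assms in \<open>fastforce intro!: m_closed inv_closed\<close>)
qed

lemma comm_img:
  assumes "group S" "group G" "\<pi> \<in> hom S G" "A \<subseteq> carrier S" "B \<subseteq> carrier S"
  shows "\<pi> ` comm_subgroup S A B = comm_subgroup G (\<pi> ` A) (\<pi> ` B)"
proof -
  interpret gh: group_hom S G \<pi> using assms by (simp add: group_hom_def group_hom_axioms_def)
  have sub: "{grp_comm S a b | a b. a \<in> A \<and> b \<in> B} \<subseteq> carrier S"
    using assms by (fastforce simp: grp_comm_def intro!: gh.G.m_closed gh.G.inv_closed)
  have "\<pi> ` {grp_comm S a b | a b. a \<in> A \<and> b \<in> B} = {grp_comm G c d | c d. c \<in> \<pi> ` A \<and> d \<in> \<pi> ` B}"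
  proof (rule equalityI)
    show "\<pi> ` {grp_comm S a b | a b. a \<in> A \<and> b \<in> B} \<subseteq> {grp_comm G c d | c d. c \<in> \<pi> ` A \<and> d \<in> \<pi> ` B}"
      using assms(4,5) by (auto simp: grp_comm_def gh.hom_mult gh.hom_inv subset_iff) blast
    show "{grp_comm G c d | c d. c \<in> \<pi> ` A \<and> d \<in> \<pi> ` B} \<subseteq> \<pi> ` {grp_comm S a b | a b. a \<in> A \<and> b \<in> B}"
    proof safe
      fix a b assume ab: "a \<in> A" "b \<in> B"
      have "grp_comm G (\<pi> a) (\<pi> b) = \<pi> (grp_comm S a b)"
        using ab assms(4,5) by (auto simp: grp_comm_def gh.hom_mult gh.hom_inv subset_iff)
      thus "grp_comm G (\<pi> a) (\<pi> b) \<in> \<pi> ` {grp_comm S a b | a b. a \<in> A \<and> b \<in> B}"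
        using ab by blast
    qed
  qed
  thus ?thesis unfolding comm_subgroup_def using gh.generate_img[OF sub] by simp
qed

lemma conj_img:
  assumes "group S" "group G" "\<pi> \<in> hom S G" "A \<subseteq> carrier S" "B \<subseteq> carrier S"
  shows "\<pi> ` conj_closure S A B = conj_closure G (\<pi> ` A) (\<pi> ` B)"
proof -
  interpret gh: group_hom S G \<pi> using assms by (simp add: group_hom_def group_hom_axioms_def)
  have sub: "{inv\<^bsub>S\<^esub> b \<otimes>\<^bsub>S\<^esub> a \<otimes>\<^bsub>S\<^esub> b | a b. a \<in> A \<and> b \<in> B} \<subseteq> carrier S"
    using assms by (fastforce intro!: gh.G.m_closed gh.G.inv_closed)
  have "\<pi> ` {inv\<^bsub>S\<^esub> b \<otimes>\<^bsub>S\<^esub> a \<otimes>\<^bsub>S\<^esub> b | a b. a \<in> A \<and> b \<in> B} =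
     {inv\<^bsub>G\<^esub> b \<otimes>\<^bsub>G\<^esub> a \<otimes>\<^bsub>G\<^esub> b | a b. a \<in> \<pi> ` A \<and> b \<in> \<pi> ` B}"
  proof (rule equalityI)
    show "\<pi> ` {inv\<^bsub>S\<^esub> b \<otimes>\<^bsub>S\<^esub> a \<otimes>\<^bsub>S\<^esub> b | a b. a \<in> A \<and> b \<in> B} \<subseteq> {inv\<^bsub>G\<^esub> b \<otimes>\<^bsub>G\<^esub> a \<otimes>\<^bsub>G\<^esub> b | a b. a \<in> \<pi> ` A \<and> b \<in> \<pi> ` B}"
      using assms(4,5) by (auto simp: gh.hom_mult gh.hom_inv subset_iff) blast
    show "{inv\<^bsub>G\<^esub> b \<otimes>\<^bsub>G\<^esub> a \<otimes>\<^bsub>G\<^esub> b | a b. a \<in> \<pi> ` A \<and> b \<in> \<pi> ` B} \<subseteq> \<pi> ` {inv\<^bsub>S\<^esub> b \<otimes>\<^bsub>S\<^esub> a \<otimes>\<^bsub>S\<^esub> b | a b. a \<in> A \<and> b \<in> B}"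
    proof safe
      fix a b assume ab: "a \<in> A" "b \<in> B"
      have "inv\<^bsub>G\<^esub> (\<pi> b) \<otimes>\<^bsub>G\<^esub> \<pi> a \<otimes>\<^bsub>G\<^esub> \<pi> b = \<pi> (inv\<^bsub>S\<^esub> b \<otimes>\<^bsub>S\<^esub> a \<otimes>\<^bsub>S\<^esub> b)"
        using ab assms(4,5) by (auto simp: gh.hom_mult gh.hom_inv subset_iff)
      thus "inv\<^bsub>G\<^esub> (\<pi> b) \<otimes>\<^bsub>G\<^esub> \<pi> a \<otimes>\<^bsub>G\<^esub> \<pi> b \<in> \<pi> ` {inv\<^bsub>S\<^esub> b \<otimes>\<^bsub>S\<^esub> a \<otimes>\<^bsub>S\<^esub> b | a b. a \<in> A \<and> b \<in> B}"
        using ab by blast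
    qed
  qed
  thus ?thesis unfolding conj_closure_def using gh.generate_img[OF sub] by simp
qed

lemma DF_comm:
  fixes G (structure)
  assumes "group G" "perfect_subgroup G D" "full_subgroup G D F"
  shows "comm_subgroup G D F = F"
proof -
  interpret group G by fact
  have sD: "subgroup D G" and sF: "subgroup F G" and DF: "D \<subseteq> F"
    and cc: "conj_closure G D F = F" and pD: "comm_subgroup G D D = D"
    using assms unfolding perfect_subgroup_def full_subgroup_def by auto
  have Fc: "F \<subseteq> carrier G" using sF subgroup.subset by blast
  have Dc: "D \<subseteq> carrier G" using sD subgroup.subset by blast
  have sub: "subgroup (comm_subgroup G D F) G" using comm_is_subgroup[OF assms(1) Dc Fc] .
  have DinC: "D \<subseteq> comm_subgroup G D F"
  proof -
    have "comm_subgroup G D D \<subseteq> comm_subgroup G D F"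
      unfolding comm_subgroup_def by (rule mono_generate) (use DF in blast)
    thus ?thesis using pD by simp
  qed
  have "conj_closure G D F \<subseteq> comm_subgroup G D F" unfolding conj_closure_def
  proof (rule generate_subgroup_incl[OF _ sub], safe)
    fix a b assume ab: "a \<in> D" "b \<in> F"
    have c: "a \<in> carrier G" "b \<in> carrier G" using ab Dc Fc by auto
    have eq: "inv b \<otimes> a \<otimes> b = a \<otimes> grp_comm G a b"
      unfolding grp_comm_def using c by (simp add: m_assoc[symmetric])
    have "grp_comm G a b \<in> comm_subgroup G D F"
      unfolding comm_subgroup_def using ab by (intro generate.incl) blast
    thus "inv b \<otimes> a \<otimes> b \<in> comm_subgroup G D F"
      unfolding eq using DinC ab sub by (simp add: subgroup.m_closed subset_iff)
  qed
  moreover have "comm_subgroup G D F \<subseteq> F"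
    using comm_in_subgroup[OF assms(1) sF DF] by simp
  ultimately show ?thesis using cc by auto
qed

theorem lemma2p3:
  fixes G :: "('a, 'c) monoid_scheme" and S :: "('b, 'd) monoid_scheme"
    and \<pi> :: "'b \<Rightarrow> 'a" and D F :: "'a set"
  assumes "group G" and "group S"
    and "perfect_subgroup G D"
    and "full_subgroup G D F"
    and "\<pi> \<in> hom S G" and "\<pi> ` carrier S = carrier G"
    and "kernel S G \<pi> \<subseteq> group_center S"
  shows "\<exists>Dt Ft.
      subgroup Dt S \<and> \<pi> ` Dt = D \<and> (\<forall>H. subgroup H S \<and> \<pi> ` H = D \<longrightarrow> Dt \<subseteq> H) \<and>
      subgroup Ft S \<and> \<pi> ` Ft = F \<and> (\<forall>H. subgroup H S \<and> \<pi> ` H = F \<longrightarrow> Ft \<subseteq> H) \<and>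
      (\<forall>Dh Fh. subgroup Dh S \<and> \<pi> ` Dh = D \<and> subgroup Fh S \<and> \<pi> ` Fh = F \<longrightarrow>
          comm_subgroup S Fh Fh = Ft \<and> comm_subgroup S Dh Fh = Ft) \<and>
      perfect_subgroup S Dt \<and> full_subgroup S Dt Ft"
proof -
  note gG = assms(1) and gS = assms(2) and hom = assms(5) and surj = assms(6) and ker = assms(7)
  interpret S: group S by fact
  interpret gh: group_hom S G \<pi> using assms by (simp add: group_hom_def group_hom_axioms_def)
  have sD: "subgroup D G" and sF: "subgroup F G" and DF: "D \<subseteq> F"
    and pD: "comm_subgroup G D D = D" and ccG: "conj_closure G D F = F"
    using assms(3,4) unfolding perfect_subgroup_def full_subgroup_def by auto
  have Dc: "D \<subseteq> carrier G" using sD subgroup.subset by blast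
  have Fc: "F \<subseteq> carrier G" using sF subgroup.subset by blast
  have cDF: "comm_subgroup G D F = F" using DF_comm[OF gG assms(3,4)] .
  define Dh0 where "Dh0 = {x \<in> carrier S. \<pi> x \<in> D}"
  define Fh0 where "Fh0 = {x \<in> carrier S. \<pi> x \<in> F}"
  have Dh0c: "Dh0 \<subseteq> carrier S" and Fh0c: "Fh0 \<subseteq> carrier S" unfolding Dh0_def Fh0_def by auto
  have iD: "\<pi> ` Dh0 = D" unfolding Dh0_def using surj Dc by auto
  have iF: "\<pi> ` Fh0 = F" unfolding Fh0_def using surj Fc by auto
  define Dt where "Dt = comm_subgroup S Dh0 Dh0"
  define Ft where "Ft = comm_subgroup S Dh0 Fh0"
  have sDt: "subgroup Dt S" unfolding Dt_def using comm_is_subgroup[OF gS Dh0c Dh0c] .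
  have sFt: "subgroup Ft S" unfolding Ft_def using comm_is_subgroup[OF gS Dh0c Fh0c] .
  have Dtc: "Dt \<subseteq> carrier S" using sDt subgroup.subset by blast
  have Ftc: "Ft \<subseteq> carrier S" using sFt subgroup.subset by blast
  have iDt: "\<pi> ` Dt = D" unfolding Dt_def using comm_img[OF gS gG hom Dh0c Dh0c] iD pD by simp
  have iFt: "\<pi> ` Ft = F" unfolding Ft_def using comm_img[OF gS gG hom Dh0c Fh0c] iD iF cDF by simp
  have lift: "\<And>U V. U \<subseteq> carrier S \<Longrightarrow> \<pi> ` U \<subseteq> \<pi> ` V \<Longrightarrow> \<forall>a\<in>U. \<exists>a'\<in>V. \<pi> a = \<pi> a'"
    by blast
  have CL: "\<And>U U' V V'. U \<subseteq> carrier S \<Longrightarrow> U' \<subseteq> carrier S \<Longrightarrow> V \<subseteq> carrier S \<Longrightarrow> V' \<subseteq> carrier S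
      \<Longrightarrow> \<pi> ` U \<subseteq> \<pi> ` U' \<Longrightarrow> \<pi> ` V \<subseteq> \<pi> ` V' \<Longrightarrow> comm_subgroup S U V \<subseteq> comm_subgroup S U' V'"
    by (rule comm_lift[OF gS hom ker], assumption+, (rule lift; assumption)+, rule gG)
  have CS: "\<And>H. subgroup H S \<Longrightarrow> comm_subgroup S H H \<subseteq> H"
    using comm_in_subgroup[OF gS] by blast
  have minD: "\<forall>H. subgroup H S \<and> \<pi> ` H = D \<longrightarrow> Dt \<subseteq> H"
  proof safe
    fix H x assume H: "subgroup H S" "D = \<pi> ` H" "x \<in> Dt"
    have Hc: "H \<subseteq> carrier S" using H subgroup.subset by blast
    have "Dt \<subseteq> comm_subgroup S H H" unfolding Dt_def
      by (rule CL[OF Dh0c Hc Dh0c Hc]) (use iD H in auto)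
    thus "x \<in> H" using CS[OF H(1)] H(3) by blast
  qed
  have minF: "\<forall>H. subgroup H S \<and> \<pi> ` H = F \<longrightarrow> Ft \<subseteq> H"
  proof safe
    fix H x assume H: "subgroup H S" "F = \<pi> ` H" "x \<in> Ft"
    have Hc: "H \<subseteq> carrier S" using H subgroup.subset by blast
    have "Ft \<subseteq> comm_subgroup S H H" unfolding Ft_def
      by (rule CL[OF Dh0c Hc Fh0c Hc]) (use iD iF DF H in auto)
    thus "x \<in> H" using CS[OF H(1)] H(3) by blast
  qed
  have main: "\<forall>Dh Fh. subgroup Dh S \<and> \<pi> ` Dh = D \<and> subgroup Fh S \<and> \<pi> ` Fh = F \<longrightarrow>
          comm_subgroup S Fh Fh = Ft \<and> comm_subgroup S Dh Fh = Ft"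
  proof (intro allI impI, elim conjE)
    fix Dh Fh assume H: "subgroup Dh S" "\<pi> ` Dh = D" "subgroup Fh S" "\<pi> ` Fh = F"
    have Dhc: "Dh \<subseteq> carrier S" using H subgroup.subset by blast
    have Fhc: "Fh \<subseteq> carrier S" using H subgroup.subset by blast
    have e1: "comm_subgroup S Dh Fh = Ft" unfolding Ft_def
      by (rule equalityI; rule CL) (use Dhc Fhc Dh0c Fh0c iD iF H in auto)
    have "comm_subgroup S Fh Fh \<subseteq> comm_subgroup S Ft Ft"
      by (rule CL) (use Fhc Ftc iFt H in auto)
    also have "\<dots> \<subseteq> Ft" using CS[OF sFt] .
    finally have a: "comm_subgroup S Fh Fh \<subseteq> Ft" .
    have "comm_subgroup S Dh Fh \<subseteq> comm_subgroup S Fh Fh"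
      by (rule CL) (use Fhc Dhc DF H in auto)
    thus "comm_subgroup S Fh Fh = Ft \<and> comm_subgroup S Dh Fh = Ft" using a e1 by auto
  qed
  have DtFt: "Dt \<subseteq> Ft" unfolding Dt_def Ft_def
    by (rule CL) (use Dh0c Fh0c iD iF DF in auto)
  have perf: "perfect_subgroup S Dt"
  proof -
    have "comm_subgroup S Dh0 Dh0 \<subseteq> comm_subgroup S Dt Dt"
      by (rule CL) (use Dh0c Dtc iD iDt in auto)
    hence "Dt \<subseteq> comm_subgroup S Dt Dt" by (simp add: Dt_def[symmetric])
    thus ?thesis unfolding perfect_subgroup_def using sDt CS[OF sDt] by auto
  qed
  have full: "full_subgroup S Dt Ft"
  proof -
    have a: "conj_closure S Dt Ft \<subseteq> Ft" using conj_in_subgroup[OF gS sFt DtFt] by simp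
    have "subgroup (conj_closure S Dt Ft) S" using conj_is_subgroup[OF gS Dtc Ftc] .
    moreover have "\<pi> ` conj_closure S Dt Ft = F"
      using conj_img[OF gS gG hom Dtc Ftc] iDt iFt ccG by simp
    ultimately have "Ft \<subseteq> conj_closure S Dt Ft" using minF by blast
    thus ?thesis unfolding full_subgroup_def using a sDt sFt DtFt by auto
  qed
  show ?thesis
    by (rule exI[of _ Dt], rule exI[of _ Ft])
       (use sDt iDt minD sFt iFt minF main perf full in blast)
qed

end
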